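(* In the spectrum pricing game described in the context, let $(\psi_1,\ldots,\psi_n)$ be any symmetric Nash equilibrium, with support endpoints $L_i$ and $U_i$. Then for each $i\in\{1,\ldots,n\}$, the support of $\psi_i$ is the whole interval $[L_i,U_i]$. Moreover, $U_1=v$ and $U_i=L_{i-1}$ for $i=2,\ldots,n$. In particular, each $\psi_i$ is strictly increasing on $[L_i,U_i]$.
   Context: Spectrum pricing game. There are $l\ge 2$ primaries and $m$ secondaries, $1\le m<l$; there are $n$ channel states $1,\ldots,n$, plus state $0$ meaning "unavailable". Each primary owns one channel, which independently of the others is in state $i\in\{1,\ldots,n\}$ with probability $q_i>0$ and in state $0$ with probability $1-q$, where $q=\sum_{i=1}^n q_i\in(0,1)$. For each state $i\ge1$ there is a penalty function $g_i$, continuous and strictly increasing in the price, with inverse $f_i$, also continuous and strictly increasing. Quoting price $p$ for a channel in state $i$ means the channel offers penalty $g_i(p)$; equivalently, choosing penalty $x$ in state $i$ means charging price $f_i(x)$. Higher states are better: $g_i(p)>g_j(p)$ for all $p$ and $f_i(x)<f_j(x)$ for all $x$ whenever $i<j$. There is a transition cost $c>0$ and a maximum acceptable penalty $v$ with $g_1(c)<v$. We assume that all points used below lie in the common domain of the $f_i$, and that for all $j<k$ and all $x>y>g_j(c)$, $$\frac{f_j(y)-c}{f_k(y)-c}<\frac{f_j(x)-c}{f_k(x)-c}. \qquad (\ast)$$ Each primary knows only its own channel state. A primary whose channel is in state $j\ge1$ draws its penalty from a distribution function $\psi_j$, independently of everything else. A primary in state $0$ offers penalty $v+1$, which is equivalent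 to not offering its channel. If $Y$ channels are offered with penalty at most $v$, the $\min(Y,m)$ channels with the lowest penalties are sold, with ties broken uniformly at random. A primary selling at price $p$ earns $p-c$; otherwise it earns $0$. Strategies and equilibrium. A symmetric strategy profile is one in which every primary uses the same $(\psi_1,\ldots,\psi_n)$. Given such a profile, let $r(x)$ be the probability that a given primary's channel offered at penalty $x$ is sold, and set $\phi_j(x)=(f_j(x)-c)\,r(x)$, the expected profit of choosing penalty $x$ in state $j$. A symmetric Nash equilibrium (NE) is a symmetric profile in which no primary, in any state $j$, can increase its expected profit by unilaterally replacing $\psi_j$ with any other distribution. A penalty $x$ is a best response in state $j$ if $\phi_j(x)=\sup_{y\in\mathbb{R}}\phi_j(y)=:u_{j,\max}$. For a distribution function $\psi_i$, write $L_i=\inf\{x:\psi_i(x)>0\}$ and $U_i=\inf\{x:\psi_i(x)=1\}$. *)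

theory Defs
  imports "HOL-Probability.Probability"
begin

text \<open>The rival penalty distribution of one other primary is the mixture
(1-q) point mass at v+1 plus the sum over i of q i times psi i.\<close>

text \<open>Probability that one rival offers a penalty strictly below x (for x \<le> v).\<close>
definition rival_lt :: "nat \<Rightarrow> (nat \<Rightarrow> real) \<Rightarrow> (nat \<Rightarrow> real measure) \<Rightarrow> real \<Rightarrow> real" where
  "rival_lt n q \<psi> x = (\<Sum>i=1..n. q i * measure (\<psi> i) {..<x})"

text \<open>Probability that one rival offers exactly penalty x (for x \<le> v).\<close>
definition rival_eq :: "nat \<Rightarrow> (nat \<Rightarrow> real) \<Rightarrow> (nat \<Rightarrow> real measure) \<Rightarrow> real \<Rightarrow> real" where
  "rival_eq n q \<psi> x = (\<Sum>i=1..n. q i * measure (\<psi> i) {x})"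

text \<open>Conditional probability of selling when k rivals are strictly cheaper and
t rivals tie, with m buyers and uniform tie breaking.\<close>
definition sale_weight :: "nat \<Rightarrow> nat \<Rightarrow> nat \<Rightarrow> real" where
  "sale_weight m k t =
     (if m \<le> k then 0 else if k + t < m then 1 else real (m - k) / real (t + 1))"

text \<open>r(x): probability that a primary offering penalty x sells, when the other
l-1 primaries independently follow the symmetric profile psi (multinomial over the
numbers of rivals strictly below / equal to / strictly above x).\<close>
definition sale_prob ::
  "nat \<Rightarrow> nat \<Rightarrow> nat \<Rightarrow> (nat \<Rightarrow> real) \<Rightarrow> (nat \<Rightarrow> real measure) \<Rightarrow> real \<Rightarrow> real \<Rightarrow> real" where
  "sale_prob l m n q \<psi> v x =
     (if x \<le> v then
        (let a = rival_lt n q \<psi> x; b = rival_eq n q \<psi> x; d = 1 - a - b; N = l - 1 in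
         \<Sum>k=0..N. \<Sum>t=0..N-k.
            real (N choose k) * real ((N - k) choose t) * a ^ k * b ^ t * d ^ (N - k - t)
            * sale_weight m k t)
      else 0)"

definition profit ::
  "nat \<Rightarrow> nat \<Rightarrow> nat \<Rightarrow> (nat \<Rightarrow> real) \<Rightarrow> (nat \<Rightarrow> real \<Rightarrow> real) \<Rightarrow> real \<Rightarrow> real
     \<Rightarrow> (nat \<Rightarrow> real measure) \<Rightarrow> nat \<Rightarrow> real \<Rightarrow> real" where
  "profit l m n q f c v \<psi> j x = (f j x - c) * sale_prob l m n q \<psi> v x"

text \<open>Symmetric Nash equilibrium: in every state j, no distribution yields a
strictly larger expected profit.  (The positive part of the profit is bounded,
so a deviation with non-integrable profit has expected profit -infinity.)\<close>
definition symmetric_NE ::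
  "nat \<Rightarrow> nat \<Rightarrow> nat \<Rightarrow> (nat \<Rightarrow> real) \<Rightarrow> (nat \<Rightarrow> real \<Rightarrow> real) \<Rightarrow> real \<Rightarrow> real
     \<Rightarrow> (nat \<Rightarrow> real measure) \<Rightarrow> bool" where
  "symmetric_NE l m n q f c v \<psi> \<longleftrightarrow>
     (\<forall>j\<in>{1..n}. real_distribution (\<psi> j)) \<and>
     (\<forall>j\<in>{1..n}. integrable (\<psi> j) (profit l m n q f c v \<psi> j) \<and>
        (\<forall>\<mu>. real_distribution \<mu> \<longrightarrow> integrable \<mu> (profit l m n q f c v \<psi> j) \<longrightarrow>
            (\<integral>x. profit l m n q f c v \<psi> j x \<partial>\<mu>) \<le> (\<integral>x. profit l m n q f c v \<psi> j x \<partial>\<psi> j)))"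

text \<open>Support of a distribution on the reals (the smallest closed set of full measure).\<close>
definition dist_support :: "real measure \<Rightarrow> real set" where
  "dist_support M = {x. \<forall>e>0. measure M {x - e<..<x + e} > 0}"

definition supp_L :: "real measure \<Rightarrow> real" where
  "supp_L M = Inf {x. cdf M x > 0}"

definition supp_U :: "real measure \<Rightarrow> real" where
  "supp_U M = Inf {x. cdf M x = 1}"

end

theory Submission
  imports Defs
begin

definition Gf :: "nat \<Rightarrow> nat \<Rightarrow> real \<Rightarrow> real \<Rightarrow> real" where
 "Gf N m a d = (\<Sum>k=0..N. real (N choose k) * a^k * d^(N-k) * (if k < m then 1 else 0))"

definition Sf :: "nat \<Rightarrow> nat \<Rightarrow> real \<Rightarrow> real \<Rightarrow> real" where
 "Sf N m a b = (\<Sum>k=0..N. \<Sum>t=0..N-k. real (N choose k) * real ((N-k) choose t) * a^k * b^t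
     * (1-a-b)^(N-k-t) * sale_weight m k t)"

lemma sale_prob_eq: "sale_prob l m n q \<psi> v x =
   (if x \<le> v then Sf (l-1) m (rival_lt n q \<psi> x) (rival_eq n q \<psi> x) else 0)"
  by (simp add: sale_prob_def Sf_def Let_def)

lemma sw_nonneg: "0 \<le> sale_weight m k t"
  by (simp add: sale_weight_def)

lemma sw_le1: "sale_weight m k t \<le> 1"
  by (auto simp: sale_weight_def field_simps of_nat_diff)

lemma sw_ge: "m \<le> k \<Longrightarrow> sale_weight m k t = 0"
  by (simp add: sale_weight_def)

lemma sw_0: "k < m \<Longrightarrow> sale_weight m k 0 = 1"
  by (simp add: sale_weight_def)

lemma sw_strict: "1 \<le> m \<Longrightarrow> m \<le> N \<Longrightarrow> sale_weight m 0 N < 1"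
  by (simp add: sale_weight_def)

lemma Gf_pos: assumes "0 \<le> a" "0 < d" "1 \<le> m" shows "0 < Gf N m a d"
proof -
  have "real (N choose 0) * a^0 * d^(N-0) * (if 0 < m then 1 else 0) \<le> Gf N m a d"
    unfolding Gf_def using assms by (intro member_le_sum) auto
  moreover have "0 < real (N choose 0) * a^0 * d^(N-0) * (if 0 < m then 1 else 0)"
    using assms by simp
  ultimately show ?thesis by linarith
qed

lemma S_ge: assumes "0 \<le> a" "0 \<le> b" "a + b \<le> 1"
  shows "Gf N m a (1-a-b) \<le> Sf N m a b"
  unfolding Gf_def Sf_def
proof (rule sum_mono)
  fix k assume k: "k \<in> {0..N}"
  let ?F = "\<lambda>t. real (N choose k) * real ((N-k) choose t) * a^k * b^t
     * (1-a-b)^(N-k-t) * sale_weight m k t"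
  have le: "?F 0 \<le> sum ?F {0..N-k}"
    using assms by (intro member_le_sum) (auto intro!: mult_nonneg_nonneg sw_nonneg)
  have eq: "?F 0 = real (N choose k) * a^k * (1-a-b)^(N-k) * (if k < m then 1 else 0)"
    by (cases "k < m") (simp_all add: sale_weight_def)
  show "real (N choose k) * a^k * (1-a-b)^(N-k) * (if k < m then 1 else 0) \<le> sum ?F {0..N-k}"
    using le unfolding eq .
qed

lemma S_zero: "Sf N m a 0 = Gf N m a (1-a)"
  unfolding Gf_def Sf_def
proof (rule sum.cong[OF refl])
  fix k assume k: "k \<in> {0..N}"
  let ?F = "\<lambda>t. real (N choose k) * real ((N-k) choose t) * a^k * (0::real)^t
     * (1-a-0)^(N-k-t) * sale_weight m k t"
  have "sum ?F {0..N-k} = ?F 0 + sum ?F {Suc 0..N-k}"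
    by (rule sum.atLeast_Suc_atMost) simp
  also have "sum ?F {Suc 0..N-k} = 0" by (intro sum.neutral) auto
  finally show "sum ?F {0..N-k} = real (N choose k) * a^k * (1-a)^(N-k) * (if k < m then 1 else 0)"
    by (simp add: sale_weight_def)
qed

lemma S_lt: assumes "0 \<le> a" "0 < b" "a + b \<le> 1" "1 \<le> m" "m \<le> N"
  shows "Sf N m a b < Gf N m a (1-a)"
proof -
  define d where "d = 1 - a - b"
  have d0: "0 \<le> d" using assms by (simp add: d_def)
  let ?F = "\<lambda>k t. real (N choose k) * real ((N-k) choose t) * a^k * b^t * d^(N-k-t)"
  have G: "Gf N m a (1-a) = (\<Sum>k=0..N. \<Sum>t=0..N-k. ?F k t * (if k < m then 1 else 0))"
    unfolding Gf_def
  proof (rule sum.cong[OF refl])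
    fix k assume k: "k \<in> {0..N}"
    have "(1-a)^(N-k) = (b + d)^(N-k)" by (simp add: d_def)
    also have "\<dots> = (\<Sum>t\<le>N-k. real ((N-k) choose t) * b^t * d^(N-k-t))"
      by (rule binomial_ring)
    finally have e: "(1-a)^(N-k) = (\<Sum>t=0..N-k. real ((N-k) choose t) * b^t * d^(N-k-t))"
      by (simp add: atLeast0AtMost)
    show "real (N choose k) * a^k * (1-a)^(N-k) * (if k < m then 1 else 0) =
      (\<Sum>t=0..N-k. ?F k t * (if k < m then 1 else 0))"
      unfolding e by (simp add: sum_distrib_left sum_distrib_right algebra_simps)
  qed
  have S: "Sf N m a b = (\<Sum>k=0..N. \<Sum>t=0..N-k. ?F k t * sale_weight m k t)"
    unfolding Sf_def d_def by simp
  have Fnn: "0 \<le> ?F k t" for k t using assms d0 by simp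
  have le: "?F k t * sale_weight m k t \<le> ?F k t * (if k < m then 1 else 0)" for k t
    using Fnn[of k t] sw_le1[of m k t] sw_ge[of m k t]
    by (cases "k < m") (auto intro: mult_left_le)
  show ?thesis unfolding G S
  proof (rule sum_strict_mono_ex1)
    show "\<forall>k\<in>{0..N}. (\<Sum>t=0..N-k. ?F k t * sale_weight m k t) \<le> (\<Sum>t=0..N-k. ?F k t * (if k < m then 1 else 0))"
      by (intro ballI sum_mono le)
    have "(\<Sum>t=0..N-0. ?F 0 t * sale_weight m 0 t) < (\<Sum>t=0..N-0. ?F 0 t * (if 0 < m then 1 else 0))"
    proof (rule sum_strict_mono_ex1)
      show "\<forall>t\<in>{0..N - 0}. ?F 0 t * sale_weight m 0 t \<le> ?F 0 t * (if 0 < m then 1 else 0)"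
        using le[of 0] by blast
      have "?F 0 N * sale_weight m 0 N < ?F 0 N * (if 0 < m then 1 else 0)"
        using sw_strict[OF assms(4,5)] assms by simp
      then show "\<exists>t\<in>{0..N - 0}. ?F 0 t * sale_weight m 0 t < ?F 0 t * (if 0 < m then 1 else 0)"
        by force
    qed simp
    then show "\<exists>k\<in>{0..N}. (\<Sum>t=0..N-k. ?F k t * sale_weight m k t) < (\<Sum>t=0..N-k. ?F k t * (if k < m then 1 else 0))"
      by (intro bexI[of _ 0]) auto
  qed simp
qed

lemma S_pos: assumes "0 \<le> a" "0 \<le> b" "a + b < 1" "1 \<le> m" shows "0 < Sf N m a b"
  using Gf_pos[of a "1-a-b" m N] S_ge[of a b N m] assms by linarith


lemma lt_at_left:
  assumes "real_distribution M"
  shows "((\<lambda>y. measure M {..<y}) \<longlongrightarrow> measure M {..<x}) (at_left x)"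
proof (rule order_tendstoI)
  interpret real_distribution M by fact
  fix a assume a: "a < measure M {..<x}"
  have "eventually (\<lambda>y. a < cdf M y) (at_left x)"
    using order_tendstoD(1)[OF cdf_at_left a] .
  then obtain b where b: "b < x" "\<And>y. b < y \<Longrightarrow> y < x \<Longrightarrow> a < cdf M y"
    unfolding eventually_at_left_field by blast
  show "eventually (\<lambda>y. a < measure M {..<y}) (at_left x)"
    unfolding eventually_at_left_field
  proof (intro exI[of _ b] conjI allI impI)
    fix y assume y: "b < y" "y < x"
    have "a < cdf M ((b+y)/2)" using b y by auto
    also have "\<dots> \<le> measure M {..<y}" unfolding cdf_def
      using y by (intro finite_measure_mono) auto
    finally show "a < measure M {..<y}" .
  qed fact
next
  interpret real_distribution M by fact
  fix a assume a: "measure M {..<x} < a"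
  show "eventually (\<lambda>y. measure M {..<y} < a) (at_left x)"
    unfolding eventually_at_left_field
  proof (intro exI[of _ "x - 1"] conjI allI impI)
    fix y assume y: "x - 1 < y" "y < x"
    have "measure M {..<y} \<le> measure M {..<x}" using y by (intro finite_measure_mono) auto
    with a show "measure M {..<y} < a" by linarith
  qed simp
qed

locale game =
  fixes l m n :: nat and q :: "nat \<Rightarrow> real"
    and f g :: "nat \<Rightarrow> real \<Rightarrow> real" and c v :: real
    and \<psi> :: "nat \<Rightarrow> real measure"
  assumes l2: "l \<ge> 2" and m1: "1 \<le> m" and ml: "m < l" and n1: "n \<ge> 1"
    and qpos: "\<forall>i\<in>{1..n}. q i > 0"
    and qsum: "(\<Sum>i=1..n. q i) < 1"
    and f_cont: "\<forall>i\<in>{1..n}. continuous_on UNIV (f i)"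
    and f_mono: "\<forall>i\<in>{1..n}. strict_mono (f i)"
    and g_mono: "\<forall>i\<in>{1..n}. strict_mono (g i)"
    and gf: "\<forall>i\<in>{1..n}. \<forall>x. g i (f i x) = x"
    and fg: "\<forall>i\<in>{1..n}. \<forall>p. f i (g i p) = p"
    and f_order: "\<forall>i\<in>{1..n}. \<forall>j\<in>{1..n}. i < j \<longrightarrow> (\<forall>x. f i x < f j x)"
    and g1v: "g 1 c < v"
    and ratio: "\<forall>j\<in>{1..n}. \<forall>k\<in>{1..n}. j < k \<longrightarrow> (\<forall>x y. g j c < y \<longrightarrow> y < x \<longrightarrow>
                 (f j y - c) / (f k y - c) < (f j x - c) / (f k x - c))"
    and NE: "symmetric_NE l m n q f c v \<psi>"
begin

abbreviation "\<phi> \<equiv> profit l m n q f c v \<psi>"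
abbreviation "A \<equiv> rival_lt n q \<psi>"
abbreviation "Bq \<equiv> rival_eq n q \<psi>"
abbreviation "r \<equiv> sale_prob l m n q \<psi> v"
definition "u j = (\<integral>x. \<phi> j x \<partial>\<psi> j)"

lemma rd: "j \<in> {1..n} \<Longrightarrow> real_distribution (\<psi> j)"
  using NE unfolding symmetric_NE_def by blast

lemma meas_le_1: "j \<in> {1..n} \<Longrightarrow> measure (\<psi> j) S \<le> 1"
  using rd[of j] by (simp add: real_distribution_def prob_space.prob_le_1)

lemma split_le: "j \<in> {1..n} \<Longrightarrow> measure (\<psi> j) {..x} = measure (\<psi> j) {..<x} + measure (\<psi> j) {x}"
proof -
  assume j: "j \<in> {1..n}"
  interpret real_distribution "\<psi> j" using rd[OF j] .
  have e: "{..x} = {..<x} \<union> {x}" by auto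
  show ?thesis unfolding e by (rule finite_measure_Union) auto
qed

lemma q_nonneg: "i \<in> {1..n} \<Longrightarrow> 0 \<le> q i"
  using qpos less_imp_le by blast

lemma A_nonneg: "0 \<le> A x"
  unfolding rival_lt_def using qpos by (auto intro!: sum_nonneg)

lemma Bq_nonneg: "0 \<le> Bq x"
  unfolding rival_eq_def using qpos by (auto intro!: sum_nonneg)

lemma AB_cdf: "A x + Bq x = (\<Sum>i=1..n. q i * cdf (\<psi> i) x)"
  unfolding rival_lt_def rival_eq_def cdf_def sum.distrib[symmetric]
  by (intro sum.cong) (auto simp: split_le algebra_simps)

lemma AB_lt1: "A x + Bq x < 1"
proof -
  have "A x + Bq x \<le> (\<Sum>i=1..n. q i)" unfolding AB_cdf
    using qpos by (intro sum_mono) (auto simp: cdf_def intro: mult_left_le meas_le_1)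
  with qsum show ?thesis by linarith
qed

lemma r_eq: "r x = (if x \<le> v then Sf (l-1) m (A x) (Bq x) else 0)"
  by (rule sale_prob_eq)

lemma r_pos: "x \<le> v \<Longrightarrow> 0 < r x"
  unfolding r_eq using S_pos[OF A_nonneg Bq_nonneg AB_lt1 m1] by simp

lemma r_nonneg: "0 \<le> r x"
  using r_pos[of x] unfolding r_eq by (auto split: if_splits)

lemma meas_lt[measurable]: "j \<in> {1..n} \<Longrightarrow> (\<lambda>x. measure (\<psi> j) {..<x}) \<in> borel_measurable borel"
proof -
  assume j: "j \<in> {1..n}"
  interpret real_distribution "\<psi> j" using rd[OF j] .
  show ?thesis by (intro borel_measurable_mono monoI finite_measure_mono) auto
qed

lemma meas_le[measurable]: "j \<in> {1..n} \<Longrightarrow> (\<lambda>x. measure (\<psi> j) {..x}) \<in> borel_measurable borel"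
proof -
  assume j: "j \<in> {1..n}"
  interpret real_distribution "\<psi> j" using rd[OF j] .
  show ?thesis by (intro borel_measurable_mono monoI finite_measure_mono) auto
qed

lemma A_meas[measurable]: "A \<in> borel_measurable borel"
proof -
  have "A = (\<lambda>x. \<Sum>i=1..n. q i * measure (\<psi> i) {..<x})" by (simp add: rival_lt_def[abs_def])
  also have "\<dots> \<in> borel_measurable borel"
    by (intro borel_measurable_sum borel_measurable_times borel_measurable_const meas_lt) auto
  finally show ?thesis .
qed

lemma Bq_meas[measurable]: "Bq \<in> borel_measurable borel"
proof -
  have "Bq = (\<lambda>x. \<Sum>i=1..n. q i * (measure (\<psi> i) {..x} - measure (\<psi> i) {..<x}))"
    by (auto simp: rival_eq_def[abs_def] split_le intro!: ext sum.cong)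
  also have "\<dots> \<in> borel_measurable borel"
    by (intro borel_measurable_sum borel_measurable_times borel_measurable_const
        borel_measurable_diff meas_lt meas_le) auto
  finally show ?thesis .
qed

lemma f_meas[measurable]: "j \<in> {1..n} \<Longrightarrow> f j \<in> borel_measurable borel"
  using f_cont by (intro borel_measurable_continuous_onI) auto

lemma phi_meas[measurable]: "j \<in> {1..n} \<Longrightarrow> \<phi> j \<in> borel_measurable borel"
proof -
  assume j[measurable]: "j \<in> {1..n}"
  have "\<phi> j = (\<lambda>x. (f j x - c) * (if x \<le> v then Sf (l-1) m (A x) (Bq x) else 0))"
    by (simp add: profit_def[abs_def] r_eq)
  also have "\<dots> \<in> borel_measurable borel" unfolding Sf_def by measurable
  finally show ?thesis .
qed

lemma phi_int: "j \<in> {1..n} \<Longrightarrow> integrable (\<psi> j) (\<phi> j)"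
  using NE unfolding symmetric_NE_def u_def by blast

lemma phi_le: assumes j: "j \<in> {1..n}" shows "\<phi> j x \<le> u j"
proof -
  let ?M = "return borel x"
  have rdM: "real_distribution ?M"
    by (auto simp: real_distribution_def real_distribution_axioms_def prob_space_return)
  interpret M: prob_space ?M by (rule prob_space_return) simp
  have "integrable ?M (\<phi> j)"
    by (rule M.integrable_const_bound[where B="norm (\<phi> j x)"])
       (use j in \<open>auto simp: AE_return\<close>)
  then have "(\<integral>y. \<phi> j y \<partial>?M) \<le> u j"
    using NE j rdM unfolding symmetric_NE_def u_def by blast
  moreover have "(\<integral>y. \<phi> j y \<partial>?M) = \<phi> j x"
    using j by (intro integral_return) auto
  ultimately show ?thesis by simp
qed

lemma AE_br: assumes j: "j \<in> {1..n}" shows "AE x in \<psi> j. \<phi> j x = u j"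
proof -
  interpret real_distribution "\<psi> j" using rd[OF j] .
  have int: "integrable (\<psi> j) (\<lambda>x. u j - \<phi> j x)"
    using phi_int[OF j] by auto
  have "(\<integral>x. u j - \<phi> j x \<partial>\<psi> j) = 0"
    using phi_int[OF j] prob_space by (simp add: u_def)
  then have "AE x in \<psi> j. u j - \<phi> j x = 0"
    using integral_nonneg_eq_0_iff_AE[OF int] phi_le[OF j] by auto
  then show ?thesis by auto
qed

lemma br_exists:
  assumes j: "j \<in> {1..n}" and S: "S \<in> sets borel" and pos: "measure (\<psi> j) S > 0"
  shows "\<exists>x\<in>S. \<phi> j x = u j"
proof (rule ccontr)
  interpret real_distribution "\<psi> j" using rd[OF j] .
  assume "\<not> ?thesis"
  then have "AE x in \<psi> j. x \<notin> S" using AE_br[OF j] by (auto elim: eventually_mono)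
  then have "S \<in> null_sets (\<psi> j)"
    using AE_iff_null[of "\<psi> j" "\<lambda>x. x \<notin> S"] S by auto
  then have "measure (\<psi> j) S = 0" by (simp add: measure_def null_setsD1)
  with pos show False by simp
qed

lemma no_br_zero:
  assumes j: "j \<in> {1..n}" and S: "S \<in> sets borel" and nb: "\<And>x. x \<in> S \<Longrightarrow> \<phi> j x \<noteq> u j"
  shows "measure (\<psi> j) S = 0"
proof (rule ccontr)
  assume "measure (\<psi> j) S \<noteq> 0"
  then have "measure (\<psi> j) S > 0" using measure_nonneg[of "\<psi> j" S] by linarith
  then show False using br_exists[OF j S] nb by blast
qed

lemma f1v: "c < f 1 v"
proof -
  have "c = f 1 (g 1 c)" using fg n1 by auto
  also have "\<dots> < f 1 v" using f_mono n1 g1v by (auto simp: strict_mono_def)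
  finally show ?thesis .
qed


lemma fv: "j \<in> {1..n} \<Longrightarrow> c < f j v"
proof -
  assume j: "j \<in> {1..n}"
  show ?thesis
  proof (cases "j = 1")
    case False
    then have "f 1 v < f j v" using f_order j n1 by auto
    then show ?thesis using f1v by linarith
  qed (use f1v in simp)
qed

lemma u_pos: assumes j: "j \<in> {1..n}" shows "0 < u j"
proof -
  have "0 < \<phi> j v" unfolding profit_def using fv[OF j] r_pos[of v] by simp
  then show ?thesis using phi_le[OF j, of v] by linarith
qed

lemma br_props:
  assumes j: "j \<in> {1..n}" and br: "\<phi> j x = u j"
  shows "x \<le> v" "c < f j x" "g j c < x"
proof -
  have p: "0 < \<phi> j x" using br u_pos[OF j] by simp
  show xv: "x \<le> v"
  proof (rule ccontr)
    assume "\<not> x \<le> v" then have "r x = 0" by (simp add: r_eq)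
    then show False using p by (simp add: profit_def)
  qed
  show fx: "c < f j x" using p r_pos[OF xv] unfolding profit_def
    by (simp add: zero_less_mult_iff)
  have "g j c < g j (f j x)" using g_mono j fx by (auto simp: strict_mono_def)
  then show "g j c < x" using gf j by auto
qed

lemma no_atom: assumes j: "j \<in> {1..n}" shows "measure (\<psi> j) {x} = 0"
proof (rule ccontr)
  interpret real_distribution "\<psi> j" using rd[OF j] .
  assume "measure (\<psi> j) {x} \<noteq> 0"
  then have pos: "0 < measure (\<psi> j) {x}" using measure_nonneg[of "\<psi> j" "{x}"] by linarith
  obtain x' where "x' \<in> {x}" "\<phi> j x' = u j" using br_exists[OF j _ pos] by auto
  then have br: "\<phi> j x = u j" by simp
  note xv = br_props(1)[OF j br] and fx = br_props(2)[OF j br]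
  have "q j * measure (\<psi> j) {x} \<le> Bq x" unfolding rival_eq_def
    using j by (intro member_le_sum) (auto intro!: mult_nonneg_nonneg q_nonneg)
  moreover have "0 < q j * measure (\<psi> j) {x}" using pos qpos j by simp
  ultimately have Bpos: "0 < Bq x" by linarith
  have ux: "u j = (f j x - c) * Sf (l-1) m (A x) (Bq x)"
    using br xv by (simp add: profit_def r_eq)
  have "Sf (l-1) m (A x) (Bq x) < Gf (l-1) m (A x) (1 - A x)"
    using S_lt[OF A_nonneg Bpos _ m1, of x "l-1"] AB_lt1[of x] ml by simp
  then have uT: "u j < (f j x - c) * Gf (l-1) m (A x) (1 - A x)"
    unfolding ux using fx by simp
  define P where "P = (\<lambda>y. A y + Bq y)"
  define h where "h = (\<lambda>y. (f j y - c) * Gf (l-1) m (A y) (1 - P y))"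
  have limA: "(A \<longlongrightarrow> A x) (at_left x)"
  proof -
    have "((\<lambda>y. \<Sum>i=1..n. q i * measure (\<psi> i) {..<y}) \<longlongrightarrow> (\<Sum>i=1..n. q i * measure (\<psi> i) {..<x})) (at_left x)"
      by (intro tendsto_sum tendsto_mult_left lt_at_left rd) auto
    then show ?thesis by (simp add: rival_lt_def[abs_def])
  qed
  have limP: "(P \<longlongrightarrow> A x) (at_left x)"
  proof -
    have "((\<lambda>y. \<Sum>i=1..n. q i * cdf (\<psi> i) y) \<longlongrightarrow> (\<Sum>i=1..n. q i * measure (\<psi> i) {..<x})) (at_left x)"
      by (intro tendsto_sum tendsto_mult_left finite_borel_measure.cdf_at_left real_distribution.finite_borel_measure_M rd) auto
    moreover have "P = (\<lambda>y. \<Sum>i=1..n. q i * cdf (\<psi> i) y)"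
      unfolding P_def using AB_cdf by auto
    ultimately show ?thesis by (simp add: rival_lt_def)
  qed
  have "isCont (f j) x" using f_cont j by (simp add: continuous_on_eq_continuous_at)
  then have limf: "(f j \<longlongrightarrow> f j x) (at_left x)"
    using isCont_tendsto_compose[OF _ tendsto_ident_at] by blast
  have limh: "(h \<longlongrightarrow> (f j x - c) * Gf (l-1) m (A x) (1 - A x)) (at_left x)"
    unfolding h_def Gf_def by (intro tendsto_intros limf limA limP)
  have e1: "eventually (\<lambda>y. u j < h y) (at_left x)" using order_tendstoD(1)[OF limh uT] .
  have e2: "eventually (\<lambda>y. c < f j y) (at_left x)" using order_tendstoD(1)[OF limf fx] .
  have e3: "eventually (\<lambda>y. y < x) (at_left x)"
    unfolding eventually_at_left_field by (intro exI[of _ "x - 1"]) auto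
  have "eventually (\<lambda>y. False) (at_left x)"
    using e1 e2 e3
  proof eventually_elim
    case (elim y)
    have yv: "y \<le> v" using elim xv by simp
    have "Gf (l-1) m (A y) (1 - P y) \<le> Sf (l-1) m (A y) (Bq y)"
      using S_ge[OF A_nonneg Bq_nonneg, of y] AB_lt1[of y] by (simp add: P_def diff_diff_eq)
    then have "h y \<le> \<phi> j y" unfolding h_def profit_def r_eq using yv elim
      by (simp add: mult_left_mono)
    then show False using elim phi_le[OF j, of y] by linarith
  qed
  then show False by (simp add: eventually_False)
qed


lemma fbm: "j \<in> {1..n} \<Longrightarrow> finite_borel_measure (\<psi> j)"
  using rd real_distribution.finite_borel_measure_M by blast

lemma Bq_zero: "Bq x = 0"
  unfolding rival_eq_def using no_atom by simp

lemma A_cdf: "A x = (\<Sum>i=1..n. q i * cdf (\<psi> i) x)"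
  using AB_cdf[of x] Bq_zero[of x] by simp

lemma cdf_cont: "i \<in> {1..n} \<Longrightarrow> continuous_on UNIV (cdf (\<psi> i))"
  using finite_borel_measure.isCont_cdf[OF fbm] no_atom
  by (simp add: continuous_on_eq_continuous_at)

lemma A_cont: "continuous_on UNIV A"
proof -
  have "continuous_on UNIV (\<lambda>x. \<Sum>i=1..n. q i * cdf (\<psi> i) x)"
    by (intro continuous_on_sum continuous_on_mult continuous_on_const cdf_cont) auto
  then show ?thesis using A_cdf by (simp add: fun_eq_iff[symmetric] cong: continuous_on_cong)
qed

lemma A_mono: "x \<le> y \<Longrightarrow> A x \<le> A y"
  unfolding A_cdf
  by (intro sum_mono mult_left_mono finite_borel_measure.cdf_nondecreasing[OF fbm] q_nonneg) auto

lemma A_diff: "x < y \<Longrightarrow> A y - A x = (\<Sum>i=1..n. q i * measure (\<psi> i) {x<..y})"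
  unfolding A_cdf sum_subtractf[symmetric] right_diff_distrib[symmetric]
  by (intro sum.cong refl) (simp add: finite_borel_measure.cdf_diff_eq[OF fbm])

lemma A_lt1: "A x < 1"
  using AB_lt1[of x] Bq_zero[of x] by simp

definition R where "R x = Gf (l-1) m (A x) (1 - A x)"

lemma R_pos: "0 < R x"
  unfolding R_def using Gf_pos[OF A_nonneg _ m1] A_lt1[of x] by simp

lemma phi_eq: "x \<le> v \<Longrightarrow> \<phi> j x = (f j x - c) * R x"
  by (simp add: profit_def r_eq Bq_zero S_zero R_def)

lemma R_cont: "continuous_on S R"
proof -
  have "continuous_on S A" using A_cont continuous_on_subset by blast
  then show ?thesis unfolding R_def[abs_def] Gf_def by (intro continuous_intros)
qed

lemma phi_cont: assumes j: "j \<in> {1..n}" shows "continuous_on {..v} (\<phi> j)"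
proof -
  have "continuous_on {..v} (f j)" using f_cont j continuous_on_subset by blast
  then have "continuous_on {..v} (\<lambda>x. (f j x - c) * R x)"
    by (intro continuous_intros R_cont)
  then show ?thesis by (rule continuous_on_cong[THEN iffD1, rotated 2]) (auto simp: phi_eq)
qed

lemma br_closed: assumes j: "j \<in> {1..n}" shows "closed {x. \<phi> j x = u j}"
proof -
  have "{x. \<phi> j x = u j} = {x \<in> {..v}. \<phi> j x = u j}" using br_props(1)[OF j] by auto
  then show ?thesis using continuous_closed_preimage_constant[OF phi_cont[OF j]] by simp
qed

lemma ordering:
  assumes j: "j \<in> {1..n}" and k: "k \<in> {1..n}" and jk: "j < k"
    and bx: "\<phi> j x = u j" and bk: "\<phi> k y = u k"
  shows "y \<le> x"
proof (rule ccontr)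
  assume "\<not> y \<le> x" then have xy: "x < y" by simp
  note xv = br_props(1)[OF j bx] and yv = br_props(1)[OF k bk]
  define a1 where "a1 = f j x - c"
  define a2 where "a2 = f j y - c"
  define b1 where "b1 = f k x - c"
  define b2 where "b2 = f k y - c"
  have fo: "f j z < f k z" for z using f_order j k jk by auto
  have a1p: "0 < a1" using br_props(2)[OF j bx] a1_def by simp
  have "f j x < f j y" using f_mono j xy by (auto simp: strict_mono_def)
  then have a2p: "0 < a2" using br_props(2)[OF j bx] by (simp add: a2_def)
  have b1p: "0 < b1" using a1p fo[of x] by (simp add: a1_def b1_def)
  have b2p: "0 < b2" using a2p fo[of y] by (simp add: a2_def b2_def)
  have h1: "a2 * R y \<le> a1 * R x"
    using phi_le[OF j, of y] bx phi_eq[OF xv, of j] phi_eq[OF yv, of j] by (simp add: a1_def a2_def)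
  have h2: "b1 * R x \<le> b2 * R y"
    using phi_le[OF k, of x] bk phi_eq[OF xv, of k] phi_eq[OF yv, of k] by (simp add: b1_def b2_def)
  have "a2 * R y * (b1 * R x) \<le> a1 * R x * (b2 * R y)"
    by (rule mult_mono[OF h1 h2]) (use a1p b1p R_pos[of x] in auto)
  then have "(a2 * b1) * (R x * R y) \<le> (a1 * b2) * (R x * R y)" by (simp add: algebra_simps)
  then have le: "a2 * b1 \<le> a1 * b2" using R_pos[of x] R_pos[of y] by simp
  have "a1 / b1 < a2 / b2"
    using ratio j k jk br_props(3)[OF j bx] xy by (auto simp: a1_def a2_def b1_def b2_def)
  then have "a1 * b2 < a2 * b1" using b1p b2p by (simp add: field_simps)
  with le show False by simp
qed

lemma gap:
  assumes j: "j \<in> {1..n}" and bz: "\<phi> j z = u j" and zy: "z < y" and yv: "y \<le> v"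
    and zero: "\<forall>k\<in>{1..n}. measure (\<psi> k) {z<..y} = 0"
  shows False
proof -
  have "A y - A z = 0" unfolding A_diff[OF zy] using zero by simp
  then have Aeq: "R y = R z" by (simp add: R_def)
  have zv: "z \<le> v" using zy yv by simp
  have "f j z < f j y" using f_mono j zy by (auto simp: strict_mono_def)
  then have "(f j z - c) * R z < (f j y - c) * R y" using Aeq R_pos[of z] by simp
  then have "u j < \<phi> j y" using bz phi_eq[OF zv, of j] phi_eq[OF yv, of j] by simp
  then show False using phi_le[OF j, of y] by simp
qed


lemma compl_meas: assumes j: "j \<in> {1..n}" shows "measure (\<psi> j) {y<..} = 1 - cdf (\<psi> j) y"
proof -
  interpret real_distribution "\<psi> j" using rd[OF j] .
  have "measure (\<psi> j) ({..y} \<union> {y<..}) = measure (\<psi> j) {..y} + measure (\<psi> j) {y<..}"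
    by (rule finite_measure_Union) auto
  moreover have "{..y} \<union> {y<..} = UNIV" by auto
  ultimately show ?thesis using prob_space by (simp add: cdf_def)
qed

lemma cdf_le1: "j \<in> {1..n} \<Longrightarrow> cdf (\<psi> j) x \<le> 1"
  using real_distribution.cdf_bounded_prob[OF rd] by blast

lemma cdf_ge0: "j \<in> {1..n} \<Longrightarrow> 0 \<le> cdf (\<psi> j) x"
  by (simp add: cdf_def)

lemma cdf_mono: "j \<in> {1..n} \<Longrightarrow> x \<le> y \<Longrightarrow> cdf (\<psi> j) x \<le> cdf (\<psi> j) y"
  using finite_borel_measure.cdf_nondecreasing[OF fbm] by blast

lemma cdf_diff: "j \<in> {1..n} \<Longrightarrow> x < y \<Longrightarrow> measure (\<psi> j) {x<..y} = cdf (\<psi> j) y - cdf (\<psi> j) x"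
  using finite_borel_measure.cdf_diff_eq[OF fbm] by metis

lemma cdf_v: assumes j: "j \<in> {1..n}" shows "cdf (\<psi> j) v = 1"
proof -
  have "measure (\<psi> j) {v<..} = 0"
    by (rule no_br_zero[OF j]) (use br_props(1)[OF j] in force)+
  then show ?thesis using compl_meas[OF j, of v] by simp
qed

lemma cdf_low: assumes j: "j \<in> {1..n}" and x: "x \<le> g j c" shows "cdf (\<psi> j) x = 0"
  unfolding cdf_def
  by (rule no_br_zero[OF j]) (use br_props(3)[OF j] x in force)+

lemma L_props: assumes j: "j \<in> {1..n}"
  shows "\<And>x. x \<le> supp_L (\<psi> j) \<Longrightarrow> cdf (\<psi> j) x = 0"
    and "\<And>x. supp_L (\<psi> j) < x \<Longrightarrow> 0 < cdf (\<psi> j) x"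
proof -
  let ?F = "cdf (\<psi> j)" and ?S = "{x. 0 < cdf (\<psi> j) x}"
  have ne: "?S \<noteq> {}" using cdf_v[OF j] by (auto intro!: exI[of _ v])
  have bdd: "bdd_below ?S"
  proof (rule bdd_belowI[of _ "g j c"])
    fix x assume "x \<in> ?S" then show "g j c \<le> x" using cdf_low[OF j, of x] by (cases "x \<le> g j c") auto
  qed
  show gt: "0 < ?F x" if Lx: "supp_L (\<psi> j) < x" for x
  proof -
    obtain y where "y \<in> ?S" "y < x" using cInf_lessD[OF ne] Lx unfolding supp_L_def by blast
    then show ?thesis using cdf_mono[OF j, of y x] by simp
  qed
  have below: "?F x = 0" if "x < supp_L (\<psi> j)" for x
  proof (rule ccontr)
    assume "?F x \<noteq> 0" then have "x \<in> ?S" using cdf_ge0[OF j, of x] by simp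
    then have "supp_L (\<psi> j) \<le> x" unfolding supp_L_def using bdd by (rule cInf_lower)
    with that show False by simp
  qed
  let ?L = "supp_L (\<psi> j)"
  have lim: "(?F \<longlongrightarrow> measure (\<psi> j) {..<?L}) (at_left ?L)"
    using finite_borel_measure.cdf_at_left[OF fbm[OF j]] .
  have ev: "eventually (\<lambda>y. ?F y = 0) (at_left ?L)"
    unfolding eventually_at_left_field using below by (intro exI[of _ "?L - 1"]) auto
  have "(?F \<longlongrightarrow> 0) (at_left ?L)" using tendsto_eventually[OF ev] .
  then have "measure (\<psi> j) {..<?L} = 0" using tendsto_unique[OF _ lim] by force
  then have FL: "?F ?L = 0" using split_le[OF j, of ?L] no_atom[OF j] by (simp add: cdf_def)
  show "?F x = 0" if "x \<le> ?L" for x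
    using that below FL by (cases "x = ?L") auto
qed

lemma U_props: assumes j: "j \<in> {1..n}"
  shows "supp_L (\<psi> j) < supp_U (\<psi> j)" "supp_U (\<psi> j) \<le> v"
    and "\<And>x. supp_U (\<psi> j) \<le> x \<Longrightarrow> cdf (\<psi> j) x = 1"
    and "\<And>x. x < supp_U (\<psi> j) \<Longrightarrow> cdf (\<psi> j) x < 1"
proof -
  let ?F = "cdf (\<psi> j)" and ?S = "{x. cdf (\<psi> j) x = 1}" and ?U = "supp_U (\<psi> j)"
  have ne: "?S \<noteq> {}" using cdf_v[OF j] by auto
  have bdd: "bdd_below ?S"
  proof (rule bdd_belowI[of _ "supp_L (\<psi> j)"])
    fix x assume "x \<in> ?S" then show "supp_L (\<psi> j) \<le> x" using L_props(1)[OF j, of x] by (cases "x \<le> supp_L (\<psi> j)") auto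
  qed
  have "closed ?S" using continuous_closed_preimage_constant[OF cdf_cont[OF j] closed_UNIV] by simp
  then have "?U \<in> ?S" unfolding supp_U_def using closed_contains_Inf[OF ne bdd] by simp
  then have FU: "?F ?U = 1" by simp
  then show "supp_L (\<psi> j) < ?U" using L_props(1)[OF j, of ?U] by force
  show "?U \<le> v" unfolding supp_U_def using cdf_v[OF j] bdd by (intro cInf_lower) auto
  show "?F x = 1" if "?U \<le> x" for x using cdf_mono[OF j that] FU cdf_le1[OF j, of x] by simp
  show "?F x < 1" if "x < ?U" for x
  proof (rule ccontr)
    assume "\<not> ?F x < 1" then have "x \<in> ?S" using cdf_le1[OF j, of x] by simp
    then have "?U \<le> x" unfolding supp_U_def using bdd by (rule cInf_lower)
    with that show False by simp
  qed
qed

lemma last_br: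
  assumes j: "j \<in> {1..n}" and pos: "0 < cdf (\<psi> j) x"
  shows "\<exists>z\<le>x. \<phi> j z = u j \<and> cdf (\<psi> j) z = cdf (\<psi> j) x"
proof -
  let ?Z = "{w. \<phi> j w = u j} \<inter> {..x}"
  have ne: "?Z \<noteq> {}" using br_exists[OF j _ pos[unfolded cdf_def]] by auto
  have cl: "closed ?Z" using br_closed[OF j] by (intro closed_Int) auto
  have bdd: "bdd_above ?Z" by (rule bdd_aboveI[of _ x]) auto
  define z where "z = Sup ?Z"
  have zZ: "z \<in> ?Z" unfolding z_def using closed_contains_Sup[OF ne bdd cl] .
  have "cdf (\<psi> j) z = cdf (\<psi> j) x"
  proof (cases "z < x")
    case True
    have "measure (\<psi> j) {z<..x} = 0"
    proof (rule no_br_zero[OF j])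
      fix w assume w: "w \<in> {z<..x}"
      show "\<phi> j w \<noteq> u j"
      proof
        assume "\<phi> j w = u j" then have "w \<in> ?Z" using w by auto
        then have "w \<le> z" unfolding z_def using bdd by (rule cSup_upper)
        with w show False by simp
      qed
    qed simp
    then show ?thesis using cdf_diff[OF j True] by simp
  next
    case False then show ?thesis using zZ by simp
  qed
  then show ?thesis using zZ by blast
qed

lemma others_zero:
  assumes j: "j \<in> {1..n}" and bz: "\<phi> j z = u j" and bw: "\<phi> j w = u j" and yw: "y < w"
    and k: "k \<in> {1..n}" and kj: "k \<noteq> j"
  shows "measure (\<psi> k) {z<..y} = 0"
proof (rule no_br_zero[OF k])
  fix w' assume w': "w' \<in> {z<..y}"
  show "\<phi> k w' \<noteq> u k"
  proof
    assume b': "\<phi> k w' = u k"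
    show False
    proof (cases "j < k")
      case True then show False using ordering[OF j k True bz b'] w' by simp
    next
      case False then have "k < j" using kj by simp
      then show False using ordering[OF k j _ b' bw] w' yw by simp
    qed
  qed
qed simp

lemma strict_part:
  assumes j: "j \<in> {1..n}" and xy: "x < y" and Lx: "supp_L (\<psi> j) \<le> x" and yU: "y \<le> supp_U (\<psi> j)"
  shows "cdf (\<psi> j) x < cdf (\<psi> j) y"
proof (rule ccontr)
  let ?F = "cdf (\<psi> j)"
  assume "\<not> ?thesis"
  then have eq: "?F x = ?F y" using cdf_mono[OF j, of x y] xy by simp
  have "0 < ?F y" using L_props(2)[OF j] Lx xy by simp
  then have Fx: "0 < ?F x" using eq by simp
  have "?F y < 1" using U_props(4)[OF j, of x] eq xy yU by simp
  then have pos: "0 < measure (\<psi> j) {y<..}" using compl_meas[OF j, of y] by simp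
  obtain w where w: "y < w" "\<phi> j w = u j" using br_exists[OF j _ pos] by auto
  obtain z where z: "z \<le> x" "\<phi> j z = u j" "?F z = ?F x" using last_br[OF j Fx] by blast
  have zy: "z < y" using z xy by simp
  have yv: "y \<le> v" using yU U_props(2)[OF j] by simp
  show False
  proof (rule gap[OF j z(2) zy yv], intro ballI)
    fix k assume k: "k \<in> {1..n}"
    show "measure (\<psi> k) {z<..y} = 0"
    proof (cases "k = j")
      case True then show ?thesis using cdf_diff[OF j zy] z eq by simp
    qed (rule others_zero[OF j z(2) w(2) w(1) k])
  qed
qed


lemma U1: "supp_U (\<psi> 1) = v"
proof (rule ccontr)
  have j: "1 \<in> {1..n}" using n1 by simp
  let ?U = "supp_U (\<psi> 1)"
  assume "?U \<noteq> v" then have Uv: "?U < v" using U_props(2)[OF j] by simp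
  have FU: "cdf (\<psi> 1) ?U = 1" using U_props(3)[OF j] by simp
  obtain z where z: "z \<le> ?U" "\<phi> 1 z = u 1" "cdf (\<psi> 1) z = 1" using last_br[OF j, of ?U] FU by auto
  have zv: "z < v" using z Uv by simp
  show False
  proof (rule gap[OF j z(2) zv order_refl], intro ballI)
    fix k assume k: "k \<in> {1..n}"
    show "measure (\<psi> k) {z<..v} = 0"
    proof (cases "k = 1")
      case True then show ?thesis using cdf_diff[OF j zv] z cdf_v[OF j] by simp
    next
      case False then have "1 < k" using k by simp
      show ?thesis
      proof (rule no_br_zero[OF k])
        fix w' assume "w' \<in> {z<..v}" then show "\<phi> k w' \<noteq> u k"
          using ordering[OF j k \<open>1 < k\<close> z(2)] by force
      qed simp
    qed
  qed
qed

lemma Ui: assumes i: "i \<in> {2..n}" shows "supp_U (\<psi> i) = supp_L (\<psi> (i - 1))"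
proof -
  define j where "j = i - 1"
  have i': "i \<in> {1..n}" and j: "j \<in> {1..n}" and ji: "j < i" using i by (auto simp: j_def)
  let ?Ui = "supp_U (\<psi> i)" and ?Lj = "supp_L (\<psi> j)"
  have le: "?Ui \<le> ?Lj"
  proof (rule ccontr)
    assume "\<not> ?Ui \<le> ?Lj"
    define y where "y = (?Lj + ?Ui) / 2"
    have y1: "?Lj < y" "y < ?Ui" using \<open>\<not> ?Ui \<le> ?Lj\<close> by (auto simp: y_def)
    have p1: "0 < measure (\<psi> j) {..y}" using L_props(2)[OF j y1(1)] by (simp add: cdf_def)
    obtain x where x: "x \<le> y" "\<phi> j x = u j" using br_exists[OF j _ p1] by auto
    have p2: "0 < measure (\<psi> i) {y<..}" using compl_meas[OF i', of y] U_props(4)[OF i' y1(2)] by simp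
    obtain w where w: "y < w" "\<phi> i w = u i" using br_exists[OF i' _ p2] by auto
    show False using ordering[OF j i' ji x(2) w(2)] x w by simp
  qed
  have ge: "?Lj \<le> ?Ui"
  proof (rule ccontr)
    assume "\<not> ?Lj \<le> ?Ui" then have UL: "?Ui < ?Lj" by simp
    have FU: "cdf (\<psi> i) ?Ui = 1" using U_props(3)[OF i'] by simp
    obtain z where z: "z \<le> ?Ui" "\<phi> i z = u i" "cdf (\<psi> i) z = 1" using last_br[OF i', of ?Ui] FU by auto
    have zL: "z < ?Lj" using z UL by simp
    have Lv: "?Lj \<le> v" using U_props(1,2)[OF j] by simp
    have FLj: "cdf (\<psi> j) ?Lj = 0" using L_props(1)[OF j] by simp
    have p3: "0 < measure (\<psi> j) {?Lj<..}" using compl_meas[OF j, of ?Lj] FLj by simp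
    obtain w where w: "?Lj < w" "\<phi> j w = u j" using br_exists[OF j _ p3] by auto
    show False
    proof (rule gap[OF i' z(2) zL Lv], intro ballI)
      fix k assume k: "k \<in> {1..n}"
      show "measure (\<psi> k) {z<..?Lj} = 0"
      proof (cases "k = i")
        case True then show ?thesis
          using cdf_diff[OF i' zL] z U_props(3)[OF i', of ?Lj] UL by simp
      next
        case ki: False
        show ?thesis
        proof (cases "i < k")
          case True
          show ?thesis
          proof (rule no_br_zero[OF k])
            fix w' assume "w' \<in> {z<..?Lj}" then show "\<phi> k w' \<noteq> u k"
              using ordering[OF i' k True z(2)] by force
          qed simp
        next
          case False
          then have kj: "k \<le> j" using ki by (simp add: j_def)
          show ?thesis
          proof (cases "k = j")
            case True then show ?thesis
              using cdf_diff[OF j zL] FLj L_props(1)[OF j, of z] zL by simp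
          next
            case False then have "k < j" using kj by simp
            show ?thesis
            proof (rule no_br_zero[OF k])
              fix w' assume "w' \<in> {z<..?Lj}" then show "\<phi> k w' \<noteq> u k"
                using ordering[OF k j \<open>k < j\<close> _ w(2)] w(1) by force
            qed simp
          qed
        qed
      qed
    qed
  qed
  show ?thesis using le ge by (simp add: j_def)
qed

lemma supp_eq: assumes j: "j \<in> {1..n}"
  shows "dist_support (\<psi> j) = {supp_L (\<psi> j)..supp_U (\<psi> j)}"
proof (intro set_eqI iffI)
  interpret real_distribution "\<psi> j" using rd[OF j] .
  let ?L = "supp_L (\<psi> j)" and ?U = "supp_U (\<psi> j)"
  fix x assume x: "x \<in> dist_support (\<psi> j)"
  show "x \<in> {?L..?U}"
  proof (rule ccontr)
    assume "x \<notin> {?L..?U}"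
    then consider "x < ?L" | "?U < x" by force
    then show False
    proof cases
      case 1
      have "measure (\<psi> j) {x - (?L - x)<..<x + (?L - x)} \<le> measure (\<psi> j) {..?L}"
        by (intro finite_measure_mono) auto
      also have "\<dots> = 0" using L_props(1)[OF j, of ?L] by (simp add: cdf_def)
      finally have le0: "measure (\<psi> j) {x - (?L - x)<..<x + (?L - x)} \<le> 0" .
      have all: "\<forall>e>0. 0 < measure (\<psi> j) {x - e<..<x + e}" using x by (simp add: dist_support_def)
      have "0 < measure (\<psi> j) {x - (?L - x)<..<x + (?L - x)}" by (rule all[rule_format]) (use 1 in simp)
      then show False using le0 by simp
    next
      case 2
      have "measure (\<psi> j) {x - (x - ?U)<..<x + (x - ?U)} \<le> measure (\<psi> j) {?U<..}"
        by (intro finite_measure_mono) auto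
      also have "\<dots> = 0" using compl_meas[OF j, of ?U] U_props(3)[OF j, of ?U] by simp
      finally have le0: "measure (\<psi> j) {x - (x - ?U)<..<x + (x - ?U)} \<le> 0" .
      have all: "\<forall>e>0. 0 < measure (\<psi> j) {x - e<..<x + e}" using x by (simp add: dist_support_def)
      have "0 < measure (\<psi> j) {x - (x - ?U)<..<x + (x - ?U)}" by (rule all[rule_format]) (use 2 in simp)
      then show False using le0 by simp
    qed
  qed
next
  interpret real_distribution "\<psi> j" using rd[OF j] .
  let ?L = "supp_L (\<psi> j)" and ?U = "supp_U (\<psi> j)"
  fix x assume x: "x \<in> {?L..?U}"
  show "x \<in> dist_support (\<psi> j)" unfolding dist_support_def
  proof (intro CollectI allI impI)
    fix e :: real assume e: "0 < e"
    define p where "p = max ?L (x - e/2)"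
    define p' where "p' = min ?U (x + e/2)"
    have LU: "?L < ?U" using U_props(1)[OF j] .
    have pp: "p < p'" using LU x e by (auto simp: p_def p'_def)
    have "0 < cdf (\<psi> j) p' - cdf (\<psi> j) p"
      using strict_part[OF j pp] by (auto simp: p_def p'_def)
    also have "\<dots> = measure (\<psi> j) {p<..p'}" using cdf_diff[OF j pp] by simp
    also have "\<dots> \<le> measure (\<psi> j) {x - e<..<x + e}"
      using e by (intro finite_measure_mono) (auto simp: p_def p'_def)
    finally show "0 < measure (\<psi> j) {x - e<..<x + e}" .
  qed
qed

lemma main:
  shows "(\<forall>i\<in>{1..n}. dist_support (\<psi> i) = {supp_L (\<psi> i)..supp_U (\<psi> i)})
       \<and> supp_U (\<psi> 1) = v
       \<and> (\<forall>i\<in>{2..n}. supp_U (\<psi> i) = supp_L (\<psi> (i - 1)))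
       \<and> (\<forall>i\<in>{1..n}. strict_mono_on {supp_L (\<psi> i)..supp_U (\<psi> i)} (cdf (\<psi> i)))"
proof (intro conjI ballI)
  fix i assume i: "i \<in> {1..n}"
  show "dist_support (\<psi> i) = {supp_L (\<psi> i)..supp_U (\<psi> i)}" by (rule supp_eq[OF i])
  show "strict_mono_on {supp_L (\<psi> i)..supp_U (\<psi> i)} (cdf (\<psi> i))"
    unfolding strict_mono_on_def
  proof (intro allI impI)
    fix x y assume "x \<in> {supp_L (\<psi> i)..supp_U (\<psi> i)} \<and> y \<in> {supp_L (\<psi> i)..supp_U (\<psi> i)} \<and> x < y"
    then show "cdf (\<psi> i) x < cdf (\<psi> i) y" using strict_part[OF i] by auto
  qed
next
  show "supp_U (\<psi> 1) = v" by (rule U1)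
next
  fix i assume "i \<in> {2..n}" then show "supp_U (\<psi> i) = supp_L (\<psi> (i - 1))" by (rule Ui)
qed



end

theorem theorem3:
  fixes l m n :: nat and q :: "nat \<Rightarrow> real"
    and f g :: "nat \<Rightarrow> real \<Rightarrow> real" and c v :: real
    and \<psi> :: "nat \<Rightarrow> real measure"
  assumes l2: "l \<ge> 2" and m1: "1 \<le> m" and ml: "m < l" and n1: "n \<ge> 1"
    and qpos: "\<forall>i\<in>{1..n}. q i > 0"
    and qsum: "(\<Sum>i=1..n. q i) < 1"
    and f_cont: "\<forall>i\<in>{1..n}. continuous_on UNIV (f i)"
    and f_mono: "\<forall>i\<in>{1..n}. strict_mono (f i)"
    and g_cont: "\<forall>i\<in>{1..n}. continuous_on UNIV (g i)"
    and g_mono: "\<forall>i\<in>{1..n}. strict_mono (g i)"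
    and gf: "\<forall>i\<in>{1..n}. \<forall>x. g i (f i x) = x"
    and fg: "\<forall>i\<in>{1..n}. \<forall>p. f i (g i p) = p"
    and g_order: "\<forall>i\<in>{1..n}. \<forall>j\<in>{1..n}. i < j \<longrightarrow> (\<forall>p. g i p > g j p)"
    and f_order: "\<forall>i\<in>{1..n}. \<forall>j\<in>{1..n}. i < j \<longrightarrow> (\<forall>x. f i x < f j x)"
    and cpos: "c > 0"
    and g1v: "g 1 c < v"
    and ratio: "\<forall>j\<in>{1..n}. \<forall>k\<in>{1..n}. j < k \<longrightarrow> (\<forall>x y. g j c < y \<longrightarrow> y < x \<longrightarrow>
                 (f j y - c) / (f k y - c) < (f j x - c) / (f k x - c))"
    and NE: "symmetric_NE l m n q f c v \<psi>"
  shows "(\<forall>i\<in>{1..n}. dist_support (\<psi> i) = {supp_L (\<psi> i)..supp_U (\<psi> i)})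
       \<and> supp_U (\<psi> 1) = v
       \<and> (\<forall>i\<in>{2..n}. supp_U (\<psi> i) = supp_L (\<psi> (i - 1)))
       \<and> (\<forall>i\<in>{1..n}. strict_mono_on {supp_L (\<psi> i)..supp_U (\<psi> i)} (cdf (\<psi> i)))"
  proof -
  have "game l m n q f g c v \<psi>" unfolding game_def
    using l2 m1 ml n1 qpos qsum f_cont f_mono g_mono gf fg f_order g1v ratio NE by blast
  then show ?thesis by (rule game.main)
qed

end
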